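(* Let $H$ be a graph without isolated vertices, let $x$ and $y$ be adjacent vertices of degree 2 in $H$, and let $x'$ and $y'$ be the vertices such that $N_H(x)\setminus\{y\}=\{x'\}$ and $N_H(y)\setminus\{x\}=\{y'\}$. If the sets $N_H(x')\setminus\{x,y\}$ and $N_H(y')\setminus\{x,y\}$ are nonempty, then the 2-subdivision graph $S_2(H)$ is a DPDP-graph but not a minimal DPDP-graph.
   Context: Graphs are finite and may have multiple edges and loops. A leaf is a vertex of degree one. A set $D\subseteq V(G)$ is dominating if every vertex outside $D$ has a neighbor in $D$; $P$ is paired-dominating if it is dominating and the subgraph induced by $P$ has a perfect matching. A DPDP-graph is a graph $G$ admitting disjoint sets $D,P$ with $V(G)=D\cup P$, $D$ dominating and $P$ paired-dominating; a minimal DPDP-graph is a DPDP-graph no proper spanning subgraph of which is a DPDP-graph. 2-subdivision graph: for a graph $H$ with no isolated vertex, set of leaves $L_H$, and $\alpha:L_H\to\mathbb{N}=\{1,2,\dots\}$, $S_2(H)$ has vertex set $(V_H\setminus L_H)\cup\{(v,i): v\in L_H, 1\le i\le \alpha(v)\}$ together with two new vertices for each edge $e$ of $H$ ($u_e,v_e$ if $e$ joins $u\ne v$; $v_e^1,v_e^2$ if $e$ is a loop at $v$). Its edges are: the edge joining the two new vertices of each $e$; for $v\in V_H\setminus L_H$, $vv_e$ for each non-loop edge $e$ at $v$ and $vv_e^1,vv_e^2$ for each loop $e$ at $v$; for $v\in L_H$ with incident edge $e$, the edges $v_e(v,i)$, $1\le i\le\alpha(v)$. The claim holds for any choice of $\alpha$.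 *)

theory Defs
  imports Main
begin

text \<open>A multigraph is given by a vertex set V, an edge set Ed and an incidence map
  ends: each edge has one end (a loop) or two distinct ends.\<close>

definition multigraph :: "'v set \<Rightarrow> 'e set \<Rightarrow> ('e \<Rightarrow> 'v set) \<Rightarrow> bool" where
  "multigraph V Ed ends \<longleftrightarrow> finite V \<and> finite Ed \<and>
     (\<forall>e\<in>Ed. ends e \<subseteq> V \<and> (card (ends e) = 1 \<or> card (ends e) = 2))"

text \<open>Degree: loops count twice.\<close>
definition mdeg :: "'e set \<Rightarrow> ('e \<Rightarrow> 'v set) \<Rightarrow> 'v \<Rightarrow> nat" where
  "mdeg Ed ends v = card {e\<in>Ed. v \<in> ends e \<and> card (ends e) = 2}
                    + 2 * card {e\<in>Ed. ends e = {v}}"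

definition mnbhd :: "'e set \<Rightarrow> ('e \<Rightarrow> 'v set) \<Rightarrow> 'v \<Rightarrow> 'v set" where
  "mnbhd Ed ends v = {u. \<exists>e\<in>Ed. ends e = {u, v}}"

definition mleaves :: "'v set \<Rightarrow> 'e set \<Rightarrow> ('e \<Rightarrow> 'v set) \<Rightarrow> 'v set" where
  "mleaves V Ed ends = {v\<in>V. mdeg Ed ends v = 1}"

text \<open>Vertices of S_2(H): Orig v (v a non-leaf of H), Leafc v i (the copies (v,i) of a
  leaf v), Sub e v (the new vertex v_e of a non-loop edge e at v), LoopSub e i
  (the new vertices v_e^1, v_e^2 of a loop e).\<close>

datatype ('v, 'e) s2v = Orig 'v | Leafc 'v nat | Sub 'e 'v | LoopSub 'e nat

definition s2_verts :: "'v set \<Rightarrow> 'e set \<Rightarrow> ('e \<Rightarrow> 'v set) \<Rightarrow> ('v \<Rightarrow> nat) \<Rightarrow> ('v, 'e) s2v set" where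
  "s2_verts V Ed ends \<alpha> =
     Orig ` (V - mleaves V Ed ends)
   \<union> {Leafc v i | v i. v \<in> mleaves V Ed ends \<and> 1 \<le> i \<and> i \<le> \<alpha> v}
   \<union> {Sub e v | e v. e \<in> Ed \<and> card (ends e) = 2 \<and> v \<in> ends e}
   \<union> {LoopSub e i | e i. e \<in> Ed \<and> card (ends e) = 1 \<and> i \<in> {1, 2}}"

definition s2_edges :: "'v set \<Rightarrow> 'e set \<Rightarrow> ('e \<Rightarrow> 'v set) \<Rightarrow> ('v \<Rightarrow> nat) \<Rightarrow> ('v, 'e) s2v set set" where
  "s2_edges V Ed ends \<alpha> =
     {{Sub e u, Sub e v} | e u v. e \<in> Ed \<and> ends e = {u, v} \<and> u \<noteq> v}
   \<union> {{LoopSub e 1, LoopSub e 2} | e v. e \<in> Ed \<and> ends e = {v}}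
   \<union> {{Orig v, Sub e v} | e v. e \<in> Ed \<and> v \<in> ends e \<and> card (ends e) = 2
                                 \<and> v \<in> V - mleaves V Ed ends}
   \<union> {{Orig v, LoopSub e i} | e v i. e \<in> Ed \<and> ends e = {v} \<and> v \<in> V - mleaves V Ed ends
                                 \<and> i \<in> {1, 2}}
   \<union> {{Sub e v, Leafc v i} | e v i. e \<in> Ed \<and> v \<in> mleaves V Ed ends \<and> v \<in> ends e
                                 \<and> 1 \<le> i \<and> i \<le> \<alpha> v}"

definition dominating :: "'a set \<Rightarrow> 'a set set \<Rightarrow> 'a set \<Rightarrow> bool" where
  "dominating V E D \<longleftrightarrow> D \<subseteq> V \<and> (\<forall>v\<in>V - D. \<exists>u\<in>D. {u, v} \<in> E)"

definition induced_perfect_matching :: "'a set set \<Rightarrow> 'a set \<Rightarrow> bool" where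
  "induced_perfect_matching E P \<longleftrightarrow>
     (\<exists>M\<subseteq>E. (\<forall>m\<in>M. m \<subseteq> P) \<and> (\<forall>m\<in>M. \<forall>m'\<in>M. m \<noteq> m' \<longrightarrow> m \<inter> m' = {}) \<and> \<Union>M = P)"

definition paired_dominating :: "'a set \<Rightarrow> 'a set set \<Rightarrow> 'a set \<Rightarrow> bool" where
  "paired_dominating V E P \<longleftrightarrow> dominating V E P \<and> induced_perfect_matching E P"

definition dpdp :: "'a set \<Rightarrow> 'a set set \<Rightarrow> bool" where
  "dpdp V E \<longleftrightarrow> (\<exists>D P. D \<inter> P = {} \<and> D \<union> P = V \<and> dominating V E D \<and> paired_dominating V E P)"

definition minimal_dpdp :: "'a set \<Rightarrow> 'a set set \<Rightarrow> bool" where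
  "minimal_dpdp V E \<longleftrightarrow> dpdp V E \<and> \<not> (\<exists>E'. E' \<subset> E \<and> dpdp V E')"

end

theory Submission
  imports Defs
begin

definition pe :: "('e \<Rightarrow> 'v set) \<Rightarrow> 'e \<Rightarrow> ('v, 'e) s2v set" where
  "pe ends e = (if card (ends e) = 2 then Sub e ` ends e else {LoopSub e 1, LoopSub e 2})"

lemma pe_sub: "card (ends e) = 2 \<Longrightarrow> v \<in> ends e \<Longrightarrow> Sub e v \<in> pe ends e"
  by (simp add: pe_def)
lemma pe_loop: "card (ends e) \<noteq> 2 \<Longrightarrow> i \<in> {1,2} \<Longrightarrow> LoopSub e i \<in> pe ends e"
  by (auto simp add: pe_def)
lemma pe_elim: "z \<in> pe ends e \<Longrightarrow> (card (ends e) = 2 \<and> (\<exists>v\<in>ends e. z = Sub e v))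
   \<or> (card (ends e) \<noteq> 2 \<and> (z = LoopSub e 1 \<or> z = LoopSub e 2))"
  by (auto simp add: pe_def split: if_splits)
lemma pe_tag_sub: "Sub e' v \<in> pe ends e \<Longrightarrow> e' = e \<and> v \<in> ends e \<and> card (ends e) = 2"
  by (auto simp add: pe_def split: if_splits)
lemma pe_tag_loop: "LoopSub e' i \<in> pe ends e \<Longrightarrow> e' = e"
  by (auto simp add: pe_def split: if_splits)
lemma pe_orig: "Orig v \<notin> pe ends e"
  by (auto simp add: pe_def split: if_splits)
lemma pe_leaf: "Leafc v i \<notin> pe ends e"
  by (auto simp add: pe_def split: if_splits)
lemma pe_disj: "e \<noteq> e' \<Longrightarrow> pe ends e \<inter> pe ends e' = {}"
  by (auto simp add: pe_def split: if_splits)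

lemma es_sub: "e \<in> Ed \<Longrightarrow> ends e = {u,v} \<Longrightarrow> u \<noteq> v \<Longrightarrow> {Sub e u, Sub e v} \<in> s2_edges V Ed ends \<alpha>"
  unfolding s2_edges_def by blast
lemma es_loop: "e \<in> Ed \<Longrightarrow> ends e = {v} \<Longrightarrow> {LoopSub e 1, LoopSub e 2} \<in> s2_edges V Ed ends \<alpha>"
  unfolding s2_edges_def by blast
lemma es_orig: "e \<in> Ed \<Longrightarrow> v \<in> ends e \<Longrightarrow> card (ends e) = 2 \<Longrightarrow> v \<in> V - mleaves V Ed ends
   \<Longrightarrow> {Orig v, Sub e v} \<in> s2_edges V Ed ends \<alpha>"
  unfolding s2_edges_def by blast
lemma es_origloop: "e \<in> Ed \<Longrightarrow> ends e = {v} \<Longrightarrow> v \<in> V - mleaves V Ed ends \<Longrightarrow> i \<in> {1,2}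
   \<Longrightarrow> {Orig v, LoopSub e i} \<in> s2_edges V Ed ends \<alpha>"
  unfolding s2_edges_def by blast
lemma es_leaf: "e \<in> Ed \<Longrightarrow> v \<in> mleaves V Ed ends \<Longrightarrow> v \<in> ends e \<Longrightarrow> 1 \<le> i \<Longrightarrow> i \<le> \<alpha> v
   \<Longrightarrow> {Sub e v, Leafc v i} \<in> s2_edges V Ed ends \<alpha>"
  unfolding s2_edges_def by blast

lemma pe_in_edges:
  assumes H: "multigraph V Ed ends" and e: "e \<in> Ed"
  shows "pe ends e \<in> s2_edges V Ed ends \<alpha>"
proof (cases "card (ends e) = 2")
  case True
  then obtain u v where uv: "ends e = {u,v}" "u \<noteq> v" by (meson card_2_iff)
  then have "pe ends e = {Sub e u, Sub e v}" using True by (simp add: pe_def)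
  then show ?thesis using es_sub[of e Ed ends u v V \<alpha>] e uv by simp
next
  case False
  then have "card (ends e) = 1" using H e by (auto simp: multigraph_def)
  then obtain v where "ends e = {v}" by (metis One_nat_def card_1_singleton_iff)
  then show ?thesis using False es_loop[OF e] by (simp add: pe_def)
qed

lemma s2_verts_eq:
  assumes H: "multigraph V Ed ends"
  shows "s2_verts V Ed ends \<alpha> = Orig ` (V - mleaves V Ed ends)
     \<union> {Leafc v i | v i. v \<in> mleaves V Ed ends \<and> 1 \<le> i \<and> i \<le> \<alpha> v}
     \<union> \<Union>(pe ends ` Ed)"
proof -
  have c: "\<And>e. e \<in> Ed \<Longrightarrow> card (ends e) = 1 \<or> card (ends e) = 2" using H by (auto simp: multigraph_def)
  have "{Sub e v | e v. e \<in> Ed \<and> card (ends e) = 2 \<and> v \<in> ends e}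
   \<union> {LoopSub e i | e i. e \<in> Ed \<and> card (ends e) = 1 \<and> (i::nat) \<in> {1, 2}} = \<Union>(pe ends ` Ed)"
  proof (rule set_eqI, rule iffI)
    fix z assume "z \<in> {Sub e v | e v. e \<in> Ed \<and> card (ends e) = 2 \<and> v \<in> ends e}
   \<union> {LoopSub e i | e i. e \<in> Ed \<and> card (ends e) = 1 \<and> (i::nat) \<in> {1, 2}}"
    then show "z \<in> \<Union>(pe ends ` Ed)"
    proof (elim UnE CollectE exE conjE)
      fix e v assume a: "z = Sub e v" "e \<in> Ed" "card (ends e) = 2" "v \<in> ends e"
      have "z \<in> pe ends e" unfolding a(1) by (rule pe_sub[of ends e v, OF a(3) a(4)])
      then show ?thesis using a(2) by (rule UN_I[rotated])
    next
      fix e i assume a: "z = LoopSub e i" "e \<in> Ed" "card (ends e) = 1" "(i::nat) \<in> {1, 2}"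
      have "card (ends e) \<noteq> 2" using a(3) by simp
      then have "z \<in> pe ends e" unfolding a(1) by (rule pe_loop[of ends e i, OF _ a(4)])
      then show ?thesis using a(2) by (rule UN_I[rotated])
    qed
  next
    fix z assume "z \<in> \<Union>(pe ends ` Ed)"
    then obtain e where e: "e \<in> Ed" "z \<in> pe ends e" by blast
    show "z \<in> {Sub e v | e v. e \<in> Ed \<and> card (ends e) = 2 \<and> v \<in> ends e}
   \<union> {LoopSub e i | e i. e \<in> Ed \<and> card (ends e) = 1 \<and> (i::nat) \<in> {1, 2}}"
      using pe_elim[OF e(2)] c[OF e(1)] e(1) by auto
  qed
  then have eq: "{Sub e v | e v. e \<in> Ed \<and> card (ends e) = 2 \<and> v \<in> ends e}
   \<union> {LoopSub e i | e i. e \<in> Ed \<and> card (ends e) = 1 \<and> (i::nat) \<in> {1, 2}} = \<Union>(pe ends ` Ed)" .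
  show ?thesis unfolding s2_verts_def by (simp only: Un_assoc eq)
qed

lemma mdeg_loop:
  assumes "finite Ed" "e \<in> Ed" "ends e = {v}"
  shows "mdeg Ed ends v \<ge> 2"
proof -
  have "card {e\<in>Ed. ends e = {v}} \<noteq> 0" using assms by auto
  then show ?thesis unfolding mdeg_def by linarith
qed

lemma mdeg_ge3:
  assumes "finite Ed" "e \<in> Ed" "ends e = {v}" "f \<in> Ed" "v \<in> ends f" "card (ends f) = 2"
  shows "mdeg Ed ends v \<ge> 3"
proof -
  have "card {e\<in>Ed. ends e = {v}} \<noteq> 0" using assms by auto
  moreover have "card {e\<in>Ed. v \<in> ends e \<and> card (ends e) = 2} \<noteq> 0" using assms by auto
  ultimately show ?thesis unfolding mdeg_def by linarith
qed

lemma mdeg_two: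
  assumes "finite Ed" "e \<in> Ed" "f \<in> Ed" "e \<noteq> f" "v \<in> ends e" "v \<in> ends f"
    "card (ends e) = 2" "card (ends f) = 2"
  shows "mdeg Ed ends v \<ge> 2"
proof -
  have "{e,f} \<subseteq> {e\<in>Ed. v \<in> ends e \<and> card (ends e) = 2}" using assms by auto
  then have "card {e,f} \<le> card {e\<in>Ed. v \<in> ends e \<and> card (ends e) = 2}"
    by (rule card_mono[rotated]) (use assms in auto)
  then show ?thesis using assms(4) unfolding mdeg_def by simp
qed

lemma mdeg_pos:
  assumes "mdeg Ed ends v > 0"
  shows "\<exists>e\<in>Ed. (v \<in> ends e \<and> card (ends e) = 2) \<or> ends e = {v}"
proof -
  have "card {e\<in>Ed. v \<in> ends e \<and> card (ends e) = 2} > 0 \<or> card {e\<in>Ed. ends e = {v}} > 0"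
    using assms unfolding mdeg_def by auto
  then have "{e\<in>Ed. v \<in> ends e \<and> card (ends e) = 2} \<noteq> {} \<or> {e\<in>Ed. ends e = {v}} \<noteq> {}"
    by (metis card.empty less_irrefl)
  then show ?thesis by blast
qed

lemma mdeg_leaf:
  assumes "finite Ed" "mdeg Ed ends v = 1"
  shows "\<exists>e\<in>Ed. v \<in> ends e \<and> card (ends e) = 2"
  using mdeg_pos[of Ed ends v] assms mdeg_loop[of Ed _ ends v] by fastforce

lemma mdeg_deg2:
  assumes "finite Ed" "mdeg Ed ends v = 2" "e \<in> Ed" "f \<in> Ed" "e \<noteq> f" "v \<in> ends e" "v \<in> ends f"
    "card (ends e) = 2" "card (ends f) = 2"
  shows "{g\<in>Ed. v \<in> ends g \<and> card (ends g) = 2} = {e,f} \<and> {g\<in>Ed. ends g = {v}} = {}"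
proof -
  let ?A = "{g\<in>Ed. v \<in> ends g \<and> card (ends g) = 2}"
  have sub: "{e,f} \<subseteq> ?A" using assms by auto
  have fA: "finite ?A" using assms by auto
  then have le: "card {e,f} \<le> card ?A" using sub by (rule card_mono)
  then have "card ?A \<ge> 2" using assms(5) by simp
  then have "card {g\<in>Ed. ends g = {v}} = 0" "card ?A = 2" using assms(2) unfolding mdeg_def by linarith+
  moreover have "finite {g\<in>Ed. ends g = {v}}" using assms by auto
  ultimately show ?thesis using card_subset_eq[OF fA sub] assms(5) by auto
qed

lemma dominating_mono: "E' \<subseteq> E \<Longrightarrow> dominating V E' D \<Longrightarrow> dominating V E D"
  unfolding dominating_def by blast

lemma ipm_mono: "E' \<subseteq> E \<Longrightarrow> induced_perfect_matching E' P \<Longrightarrow> induced_perfect_matching E P"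
proof -
  assume a: "E' \<subseteq> E" "induced_perfect_matching E' P"
  then obtain M where "M \<subseteq> E'" "\<forall>m\<in>M. m \<subseteq> P" "\<forall>m\<in>M. \<forall>m'\<in>M. m \<noteq> m' \<longrightarrow> m \<inter> m' = {}" "\<Union>M = P"
    unfolding induced_perfect_matching_def by blast
  moreover have "M \<subseteq> E" using calculation(1) a(1) by (rule order_trans)
  ultimately show ?thesis unfolding induced_perfect_matching_def by blast
qed

lemma dpdp_mono:
  assumes "E' \<subseteq> E" "dpdp V E'" shows "dpdp V E"
proof -
  obtain D P where DP: "D \<inter> P = {}" "D \<union> P = V" "dominating V E' D" "paired_dominating V E' P"
    using assms(2) unfolding dpdp_def by blast
  have "dominating V E D" by (rule dominating_mono[OF assms(1) DP(3)])
  moreover have "paired_dominating V E P"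
    using DP(4) dominating_mono[OF assms(1)] ipm_mono[OF assms(1)] unfolding paired_dominating_def by blast
  ultimately show ?thesis using DP(1,2) unfolding dpdp_def by blast
qed

theorem proposition4p6:
  fixes V :: "'v set" and Ed :: "'e set" and ends :: "'e \<Rightarrow> 'v set"
    and \<alpha> :: "'v \<Rightarrow> nat" and x y x' y' :: 'v
  assumes H: "multigraph V Ed ends"
    and no_isolated: "\<forall>v\<in>V. mdeg Ed ends v > 0"
    and alpha: "\<forall>v\<in>mleaves V Ed ends. \<alpha> v \<ge> 1"
    and xV: "x \<in> V" and yV: "y \<in> V"
    and adj: "y \<in> mnbhd Ed ends x"
    and degx: "mdeg Ed ends x = 2" and degy: "mdeg Ed ends y = 2"
    and x': "mnbhd Ed ends x - {y} = {x'}"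
    and y': "mnbhd Ed ends y - {x} = {y'}"
    and nex: "mnbhd Ed ends x' - {x, y} \<noteq> {}"
    and ney: "mnbhd Ed ends y' - {x, y} \<noteq> {}"
  shows "dpdp (s2_verts V Ed ends \<alpha>) (s2_edges V Ed ends \<alpha>)
         \<and> \<not> minimal_dpdp (s2_verts V Ed ends \<alpha>) (s2_edges V Ed ends \<alpha>)"
proof -
  have fin: "finite Ed" using H multigraph_def by blast
  have endsV: "\<And>e. e\<in>Ed \<Longrightarrow> ends e \<subseteq> V" using H by (simp add: multigraph_def)
  have card12: "\<And>e. e\<in>Ed \<Longrightarrow> card (ends e) = 1 \<or> card (ends e) = 2" using H by (simp add: multigraph_def)
  have x'y: "x' \<noteq> y" using x' by blast
  have y'x: "y' \<noteq> x" using y' by blast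
  have x'n: "x' \<in> mnbhd Ed ends x" using x' by blast
  have y'n: "y' \<in> mnbhd Ed ends y" using y' by blast
  obtain e1 where e1: "e1 \<in> Ed" "ends e1 = {x', x}" using x'n unfolding mnbhd_def by blast
  obtain e2 where e2: "e2 \<in> Ed" "ends e2 = {y, x}" using adj unfolding mnbhd_def by blast
  obtain e3 where e3: "e3 \<in> Ed" "ends e3 = {y', y}" using y'n unfolding mnbhd_def by blast
  have noloopx: "\<forall>e\<in>Ed. ends e \<noteq> {x}"
  proof (rule ccontr)
    assume "\<not> ?thesis" then obtain e where e: "e\<in>Ed" "ends e = {x}" by blast
    have "\<exists>f\<in>Ed. x \<in> ends f \<and> card (ends f) = 2"
    proof (cases "x' = x")
      case True then show ?thesis using e2 x'y by (intro bexI[of _ e2]) auto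
    next
      case False then show ?thesis using e1 by (intro bexI[of _ e1]) auto
    qed
    then show False using mdeg_ge3[of Ed e ends x] fin e degx by fastforce
  qed
  have noloopy: "\<forall>e\<in>Ed. ends e \<noteq> {y}"
  proof (rule ccontr)
    assume "\<not> ?thesis" then obtain e where e: "e\<in>Ed" "ends e = {y}" by blast
    have "\<exists>f\<in>Ed. y \<in> ends f \<and> card (ends f) = 2"
    proof (cases "y' = y")
      case True then show ?thesis using e2 y'x by (intro bexI[of _ e2]) auto
    next
      case False then show ?thesis using e3 by (intro bexI[of _ e3]) auto
    qed
    then show False using mdeg_ge3[of Ed e ends y] fin e degy by fastforce
  qed
  have xx': "x \<noteq> x'" using noloopx e1 by auto
  have xy: "x \<noteq> y" using noloopx e2 by auto
  have yy': "y \<noteq> y'" using noloopy e3 by auto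
  have c1: "card (ends e1) = 2" using e1 xx' by auto
  have c2: "card (ends e2) = 2" using e2 xy by auto
  have c3: "card (ends e3) = 2" using e3 yy' by auto
  have e12: "e1 \<noteq> e2" using e1 e2 x'y xx' by (auto simp: doubleton_eq_iff)
  have e13: "e1 \<noteq> e3" using e1 e3 xy y'x by (auto simp: doubleton_eq_iff)
  have e23: "e2 \<noteq> e3" using e2 e3 xy y'x by (auto simp: doubleton_eq_iff)
  have onlyx: "\<And>f. f\<in>Ed \<Longrightarrow> x \<in> ends f \<Longrightarrow> f = e1 \<or> f = e2"
  proof -
    fix f assume f: "f \<in> Ed" "x \<in> ends f"
    have A: "{g\<in>Ed. x \<in> ends g \<and> card (ends g) = 2} = {e1,e2}" "{g\<in>Ed. ends g = {x}} = {}"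
      using mdeg_deg2[OF fin degx e1(1) e2(1) e12] e1 e2 c1 c2 by auto
    have "card (ends f) = 2"
    proof (rule ccontr)
      assume "card (ends f) \<noteq> 2"
      then have "card (ends f) = 1" using card12 f by blast
      then obtain w where "ends f = {w}" by (metis One_nat_def card_1_singleton_iff)
      then show False using f noloopx by auto
    qed
    then show "f = e1 \<or> f = e2" using A f by blast
  qed
  have onlyy: "\<And>f. f\<in>Ed \<Longrightarrow> y \<in> ends f \<Longrightarrow> f = e2 \<or> f = e3"
  proof -
    fix f assume f: "f \<in> Ed" "y \<in> ends f"
    have A: "{g\<in>Ed. y \<in> ends g \<and> card (ends g) = 2} = {e2,e3}" "{g\<in>Ed. ends g = {y}} = {}"
      using mdeg_deg2[OF fin degy e2(1) e3(1) e23] e2 e3 c2 c3 by auto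
    have "card (ends f) = 2"
    proof (rule ccontr)
      assume "card (ends f) \<noteq> 2"
      then have "card (ends f) = 1" using card12 f by blast
      then obtain w where "ends f = {w}" by (metis One_nat_def card_1_singleton_iff)
      then show False using f noloopy by auto
    qed
    then show "f = e2 \<or> f = e3" using A f by blast
  qed
  let ?NL = "V - mleaves V Ed ends"
  have xNL: "x \<in> ?NL" using xV degx by (simp add: mleaves_def)
  have yNL: "y \<in> ?NL" using yV degy by (simp add: mleaves_def)
  have x'V: "x' \<in> V" using endsV[OF e1(1)] e1 by auto
  have y'V: "y' \<in> V" using endsV[OF e3(1)] e3 by auto
  have nex': "(\<exists>f\<in>Ed. ends f = {x'}) \<or> (\<exists>f\<in>Ed. x' \<in> ends f \<and> card (ends f) = 2 \<and> f \<noteq> e1 \<and> f \<noteq> e3)"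
  proof -
    obtain u f where f: "f \<in> Ed" "ends f = {u, x'}" "u \<notin> {x,y}" using nex unfolding mnbhd_def by blast
    show ?thesis
    proof (cases "u = x'")
      case True then show ?thesis using f by auto
    next
      case False
      have "f \<noteq> e1" using f e1 False by (auto simp: doubleton_eq_iff)
      moreover have "f \<noteq> e3" using f e3 x'y by (auto simp: doubleton_eq_iff)
      ultimately show ?thesis using f False by auto
    qed
  qed
  have ney': "(\<exists>f\<in>Ed. ends f = {y'}) \<or> (\<exists>f\<in>Ed. y' \<in> ends f \<and> card (ends f) = 2 \<and> f \<noteq> e1 \<and> f \<noteq> e3)"
  proof -
    obtain u f where f: "f \<in> Ed" "ends f = {u, y'}" "u \<notin> {x,y}" using ney unfolding mnbhd_def by blast
    show ?thesis
    proof (cases "u = y'")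
      case True then show ?thesis using f by auto
    next
      case False
      have "f \<noteq> e3" using f e3 False by (auto simp: doubleton_eq_iff)
      moreover have "f \<noteq> e1" using f e1 y'x by (auto simp: doubleton_eq_iff)
      ultimately show ?thesis using f False by auto
    qed
  qed
  have x'NL: "x' \<in> ?NL"
  proof -
    have "mdeg Ed ends x' \<ge> 2"
      using nex'
    proof (elim disjE bexE)
      fix f assume "f \<in> Ed" "ends f = {x'}"
      then show ?thesis by (rule mdeg_loop[OF fin])
    next
      fix f assume f: "f \<in> Ed" "x' \<in> ends f \<and> card (ends f) = 2 \<and> f \<noteq> e1 \<and> f \<noteq> e3"
      show ?thesis by (rule mdeg_two[OF fin e1(1) f(1)]) (use f e1 c1 in auto)
    qed
    then show ?thesis using x'V by (simp add: mleaves_def)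
  qed
  have y'NL: "y' \<in> ?NL"
  proof -
    have "mdeg Ed ends y' \<ge> 2"
      using ney'
    proof (elim disjE bexE)
      fix f assume "f \<in> Ed" "ends f = {y'}"
      then show ?thesis by (rule mdeg_loop[OF fin])
    next
      fix f assume f: "f \<in> Ed" "y' \<in> ends f \<and> card (ends f) = 2 \<and> f \<noteq> e1 \<and> f \<noteq> e3"
      show ?thesis by (rule mdeg_two[OF fin e3(1) f(1)]) (use f e3 c3 in auto)
    qed
    then show ?thesis using y'V by (simp add: mleaves_def)
  qed
  define Sset where "Sset = \<Union>(pe ends ` Ed)"
  define LF where "LF = ({Leafc v i | v i. v \<in> mleaves V Ed ends \<and> 1 \<le> i \<and> i \<le> \<alpha> v} :: ('v, 'e) s2v set)"
  define X where "X = {Sub e1 x', Sub e2 x, Sub e2 y, Sub e3 y'}"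
  define P where "P = (Sset - X) \<union> {Orig x, Orig y}"
  define D where "D = (Orig ` ?NL - {Orig x, Orig y}) \<union> LF \<union> X"
  define ES where "ES = s2_edges V Ed ends \<alpha>"
  define E' where "E' = ES - {{Sub e2 x, Sub e2 y}}"
  define M where "M = pe ends ` (Ed - {e1,e2,e3}) \<union> {{Sub e1 x, Orig x}, {Orig y, Sub e3 y}}"
  define VS where "VS = s2_verts V Ed ends \<alpha>"
  have VS: "VS = Orig ` ?NL \<union> LF \<union> Sset"
    unfolding VS_def LF_def Sset_def by (rule s2_verts_eq[OF H])
  have SI: "\<And>e v. e \<in> Ed \<Longrightarrow> card (ends e) = 2 \<Longrightarrow> v \<in> ends e \<Longrightarrow> Sub e v \<in> Sset"
    unfolding Sset_def by (rule UN_I) (auto intro: pe_sub)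
  have sub1: "Sub e1 x \<in> Sset" "Sub e1 x' \<in> Sset" "Sub e2 x \<in> Sset" "Sub e2 y \<in> Sset"
    "Sub e3 y \<in> Sset" "Sub e3 y' \<in> Sset"
    using SI[OF e1(1) c1] SI[OF e2(1) c2] SI[OF e3(1) c3] e1 e2 e3 by auto
  have XS: "X \<subseteq> Sset" unfolding X_def using sub1 by blast
  have nX1: "Sub e1 x \<notin> X" unfolding X_def using xx' e12 e13 by auto
  have nX3: "Sub e3 y \<notin> X" unfolding X_def using yy' e23 e13 by auto
  have LFS: "\<And>v i. Leafc v i \<notin> Sset" unfolding Sset_def by (auto simp: pe_def split: if_splits)
  have OS: "\<And>v. Orig v \<notin> Sset" unfolding Sset_def by (auto simp: pe_def split: if_splits)
  have disj: "D \<inter> P = {}" unfolding D_def P_def X_def LF_def using LFS OS by auto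
  have cover: "D \<union> P = VS" unfolding VS D_def P_def using XS xNL yNL by blast
  have bb: "{Sub e2 x, Sub e2 y} \<in> ES"
    unfolding ES_def using es_sub[of e2 Ed ends x y V \<alpha>] e2 xy by (simp add: insert_commute)
  have inE': "\<And>s. s \<in> ES \<Longrightarrow> s \<noteq> {Sub e2 x, Sub e2 y} \<Longrightarrow> s \<in> E'" unfolding E'_def by blast
  have eo: "\<And>e v. e \<in> Ed \<Longrightarrow> v \<in> ends e \<Longrightarrow> card (ends e) = 2 \<Longrightarrow> v \<in> ?NL \<Longrightarrow> {Orig v, Sub e v} \<in> E'"
    by (rule inE', unfold ES_def, rule es_orig) (auto simp: doubleton_eq_iff)
  have eol: "\<And>e v i. e \<in> Ed \<Longrightarrow> ends e = {v} \<Longrightarrow> v \<in> ?NL \<Longrightarrow> i \<in> {1,2} \<Longrightarrow> {Orig v, LoopSub e i} \<in> E'"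
    by (rule inE', unfold ES_def, rule es_origloop) (auto simp: doubleton_eq_iff)
  have elf: "\<And>e v i. e \<in> Ed \<Longrightarrow> v \<in> mleaves V Ed ends \<Longrightarrow> v \<in> ends e \<Longrightarrow> 1 \<le> i \<Longrightarrow> i \<le> \<alpha> v
     \<Longrightarrow> {Sub e v, Leafc v i} \<in> E'"
    by (rule inE', unfold ES_def, rule es_leaf) (auto simp: doubleton_eq_iff)
  have ea: "{Sub e1 x', Sub e1 x} \<in> E'" "{Sub e1 x, Sub e1 x'} \<in> E'"
    using es_sub[of e1 Ed ends x' x V \<alpha>] es_sub[of e1 Ed ends x x' V \<alpha>] e1 xx' inE' e12
    unfolding ES_def by (auto simp: doubleton_eq_iff insert_commute)
  have ec: "{Sub e3 y', Sub e3 y} \<in> E'" "{Sub e3 y, Sub e3 y'} \<in> E'"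
    using es_sub[of e3 Ed ends y' y V \<alpha>] es_sub[of e3 Ed ends y y' V \<alpha>] e3 yy' inE' e23
    unfolding ES_def by (auto simp: doubleton_eq_iff insert_commute)
  have domD: "dominating VS E' D"
    unfolding dominating_def
  proof
    show "D \<subseteq> VS" using cover by blast
    show "\<forall>v\<in>VS - D. \<exists>u\<in>D. {u,v} \<in> E'"
    proof
      fix z assume z: "z \<in> VS - D"
      then have "z = Orig x \<or> z = Orig y \<or> z \<in> Sset - X" unfolding VS D_def by blast
      then show "\<exists>u\<in>D. {u,z} \<in> E'"
      proof (elim disjE)
        assume "z = Orig x"
        moreover have "Sub e2 x \<in> D" unfolding D_def X_def by blast
        moreover have "{Sub e2 x, Orig x} \<in> E'" using eo[OF e2(1) _ c2 xNL] e2 by (simp add: insert_commute)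
        ultimately show ?thesis by blast
      next
        assume "z = Orig y"
        moreover have "Sub e2 y \<in> D" unfolding D_def X_def by blast
        moreover have "{Sub e2 y, Orig y} \<in> E'" using eo[OF e2(1) _ c2 yNL] e2 by (simp add: insert_commute)
        ultimately show ?thesis by blast
      next
        assume zS: "z \<in> Sset - X"
        then obtain e where e: "e \<in> Ed" "z \<in> pe ends e" unfolding Sset_def by blast
        show ?thesis
        proof (cases "card (ends e) = 2")
          case True
          then obtain w where w: "w \<in> ends e" "z = Sub e w" using pe_elim[OF e(2)] by blast
          have wV: "w \<in> V" using endsV[OF e(1)] w by blast
          show ?thesis
          proof (cases "w \<in> mleaves V Ed ends")
            case True
            have "Leafc w 1 \<in> D" using True alpha unfolding D_def LF_def by blast
            moreover have "{Leafc w 1, z} \<in> E'"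
            proof -
              have "{Sub e w, Leafc w 1} \<in> E'" using elf[OF e(1) True w(1), of 1] alpha True by auto
              then show ?thesis using w(2) by (simp add: insert_commute)
            qed
            ultimately show ?thesis by blast
          next
            case False
            then have wNL: "w \<in> ?NL" using wV by blast
            show ?thesis
            proof (cases "w = x")
              case True
              then have "e = e1" using onlyx[OF e(1)] w zS unfolding X_def by auto
              then show ?thesis using ea w True unfolding D_def X_def by blast
            next
              case wx: False
              show ?thesis
              proof (cases "w = y")
                case True
                then have "e = e3" using onlyy[OF e(1)] w zS unfolding X_def by auto
                then show ?thesis using ec w True unfolding D_def X_def by blast
              next
                case False
                then have "Orig w \<in> D" using wx wNL unfolding D_def by blast
                then show ?thesis using eo[OF e(1) w(1) True wNL] w(2) by blast
              qed
            qed
          qed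
        next
          case False
          then have "card (ends e) = 1" using card12 e(1) by blast
          then obtain w where w: "ends e = {w}" by (metis One_nat_def card_1_singleton_iff)
          have zz: "z = LoopSub e 1 \<or> z = LoopSub e 2" using pe_elim[OF e(2)] False by blast
          have wNL: "w \<in> ?NL" using endsV[OF e(1)] w mdeg_loop[of Ed e ends w, OF fin e(1) w] by (auto simp: mleaves_def)
          have "w \<noteq> x" "w \<noteq> y" using noloopx noloopy e(1) w by auto
          then have "Orig w \<in> D" using wNL unfolding D_def by blast
          then show ?thesis using eol[OF e(1) w wNL] zz by blast
        qed
      qed
    qed
  qed
  have PS: "P \<subseteq> VS" unfolding P_def VS using xNL yNL by blast
  have Sx: "Sub e1 x \<in> P" using sub1 nX1 unfolding P_def by blast
  have Sy: "Sub e3 y \<in> P" using sub1 nX3 unfolding P_def by blast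
  have Ox: "Orig x \<in> P" "Orig y \<in> P" unfolding P_def by blast+
  have domP: "dominating VS E' P"
    unfolding dominating_def
  proof
    show "P \<subseteq> VS" by (rule PS)
    show "\<forall>v\<in>VS - P. \<exists>u\<in>P. {u,v} \<in> E'"
    proof
      fix z assume z: "z \<in> VS - P"
      then have "z \<in> D" using cover by blast
      then have "z \<in> X \<or> z \<in> LF \<or> z \<in> Orig ` ?NL - {Orig x, Orig y}" unfolding D_def by blast
      then show "\<exists>u\<in>P. {u,z} \<in> E'"
      proof (elim disjE)
        assume "z \<in> X"
        then have "z = Sub e1 x' \<or> z = Sub e2 x \<or> z = Sub e2 y \<or> z = Sub e3 y'" unfolding X_def by blast
        then show ?thesis
        proof (elim disjE)
          assume "z = Sub e1 x'" then show ?thesis using Sx ea(2) by blast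
        next
          assume zz: "z = Sub e2 x"
          have "{Orig x, Sub e2 x} \<in> E'" using eo[OF e2(1) _ c2 xNL] e2 by simp
          then show ?thesis using Ox zz by blast
        next
          assume zz: "z = Sub e2 y"
          have "{Orig y, Sub e2 y} \<in> E'" using eo[OF e2(1) _ c2 yNL] e2 by simp
          then show ?thesis using Ox zz by blast
        next
          assume "z = Sub e3 y'" then show ?thesis using Sy ec(2) by blast
        qed
      next
        assume "z \<in> LF"
        then obtain w i where wi: "z = Leafc w i" "w \<in> mleaves V Ed ends" "1 \<le> i" "i \<le> \<alpha> w"
          unfolding LF_def by blast
        have d1: "mdeg Ed ends w = 1" using wi(2) by (simp add: mleaves_def)
        obtain f where f: "f \<in> Ed" "w \<in> ends f" "card (ends f) = 2"
          using mdeg_leaf[OF fin d1] by blast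
        have "w \<notin> {x, y, x', y'}" using wi(2) xNL yNL x'NL y'NL by auto
        then have "Sub f w \<notin> X" unfolding X_def by auto
        then have "Sub f w \<in> P" using SI[OF f(1) f(3) f(2)] unfolding P_def by blast
        moreover have "{Sub f w, z} \<in> E'" using elf[OF f(1) wi(2) f(2) wi(3) wi(4)] wi(1) by simp
        ultimately show ?thesis by blast
      next
        assume "z \<in> Orig ` ?NL - {Orig x, Orig y}"
        then obtain w where w: "z = Orig w" "w \<in> ?NL" "w \<noteq> x" "w \<noteq> y" by blast
        have cs: "(\<exists>f\<in>Ed. ends f = {w}) \<or> (\<exists>f\<in>Ed. w \<in> ends f \<and> card (ends f) = 2 \<and> Sub f w \<notin> X)"
        proof (cases "w = x'")
          case True
          show ?thesis using nex'
          proof (elim disjE bexE)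
            fix f assume "f \<in> Ed" "ends f = {x'}" then show ?thesis using True by blast
          next
            fix f assume f: "f \<in> Ed" "x' \<in> ends f \<and> card (ends f) = 2 \<and> f \<noteq> e1 \<and> f \<noteq> e3"
            then have "Sub f x' \<notin> X" unfolding X_def using xx' x'y by auto
            then show ?thesis using f True by blast
          qed
        next
          case wx': False
          show ?thesis
          proof (cases "w = y'")
            case True
            show ?thesis using ney'
            proof (elim disjE bexE)
              fix f assume "f \<in> Ed" "ends f = {y'}" then show ?thesis using True by blast
            next
              fix f assume f: "f \<in> Ed" "y' \<in> ends f \<and> card (ends f) = 2 \<and> f \<noteq> e1 \<and> f \<noteq> e3"
              then have "Sub f y' \<notin> X" unfolding X_def using yy' y'x by auto
              then show ?thesis using f True by blast
            qed
          next
            case False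
            have "mdeg Ed ends w > 0" using no_isolated w(2) by blast
            then have "\<exists>f\<in>Ed. (w \<in> ends f \<and> card (ends f) = 2) \<or> ends f = {w}" by (rule mdeg_pos)
            moreover have "\<And>f. Sub f w \<notin> X" unfolding X_def using False wx' w(3) w(4) by auto
            ultimately show ?thesis by blast
          qed
        qed
        show ?thesis using cs
        proof (elim disjE bexE)
          fix f assume f: "f \<in> Ed" "ends f = {w}"
          have "card (ends f) \<noteq> 2" using f(2) by simp
          then have "LoopSub f 1 \<in> pe ends f" by (rule pe_loop) simp
          then have "LoopSub f 1 \<in> Sset" unfolding Sset_def using f(1) by blast
          moreover have "LoopSub f 1 \<notin> X" unfolding X_def by simp
          ultimately have "LoopSub f 1 \<in> P" unfolding P_def by blast
          moreover have "{Orig w, LoopSub f 1} \<in> E'" using eol[OF f(1) f(2) w(2), of 1] by simp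
          ultimately show ?thesis using w(1) by (metis insert_commute)
        next
          fix f assume f: "f \<in> Ed" "w \<in> ends f \<and> card (ends f) = 2 \<and> Sub f w \<notin> X"
          have "Sub f w \<in> P" using SI[OF f(1)] f unfolding P_def by blast
          moreover have "{Orig w, Sub f w} \<in> E'" using eo[OF f(1) _ _ w(2)] f by blast
          ultimately show ?thesis using w(1) by (metis insert_commute)
        qed
      qed
    qed
  qed
  have peX: "\<And>e. e \<in> Ed - {e1,e2,e3} \<Longrightarrow> pe ends e \<inter> X = {}"
  proof -
    fix e assume e: "e \<in> Ed - {e1,e2,e3}"
    show "pe ends e \<inter> X = {}"
    proof (rule ccontr)
      assume "pe ends e \<inter> X \<noteq> {}"
      then obtain z where z: "z \<in> pe ends e" "z \<in> X" by blast
      then have "z = Sub e1 x' \<or> z = Sub e2 x \<or> z = Sub e2 y \<or> z = Sub e3 y'" unfolding X_def by blast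
      then show False
        by (elim disjE) (use z(1) e pe_tag_sub[of e1 x' ends e] pe_tag_sub[of e2 x ends e]
            pe_tag_sub[of e2 y ends e] pe_tag_sub[of e3 y' ends e] in auto)
    qed
  qed
  have peP: "\<And>e. e \<in> Ed - {e1,e2,e3} \<Longrightarrow> pe ends e \<subseteq> P"
  proof -
    fix e assume e: "e \<in> Ed - {e1,e2,e3}"
    have "pe ends e \<subseteq> Sset" unfolding Sset_def using e by blast
    then show "pe ends e \<subseteq> P" using peX[OF e] unfolding P_def by blast
  qed
  have pep1: "\<And>e. e \<in> Ed - {e1,e2,e3} \<Longrightarrow> pe ends e \<inter> {Sub e1 x, Orig x} = {}"
  proof -
    fix e assume e: "e \<in> Ed - {e1,e2,e3}"
    have "Sub e1 x \<notin> pe ends e" using e pe_tag_sub[of e1 x ends e] by blast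
    moreover have "Orig x \<notin> pe ends e" by (rule pe_orig)
    ultimately show "pe ends e \<inter> {Sub e1 x, Orig x} = {}" by blast
  qed
  have pep2: "\<And>e. e \<in> Ed - {e1,e2,e3} \<Longrightarrow> pe ends e \<inter> {Orig y, Sub e3 y} = {}"
  proof -
    fix e assume e: "e \<in> Ed - {e1,e2,e3}"
    have "Sub e3 y \<notin> pe ends e" using e pe_tag_sub[of e3 y ends e] by blast
    moreover have "Orig y \<notin> pe ends e" by (rule pe_orig)
    ultimately show "pe ends e \<inter> {Orig y, Sub e3 y} = {}" by blast
  qed
  have p12: "{Sub e1 x, Orig x} \<inter> {Orig y, Sub e3 y} = {}" using e13 xy by auto
  have p12': "{Orig y, Sub e3 y} \<inter> {Sub e1 x, Orig x} = {}" using p12 by (simp add: Int_commute)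
  have pep1': "\<And>e. e \<in> Ed - {e1,e2,e3} \<Longrightarrow> {Sub e1 x, Orig x} \<inter> pe ends e = {}"
    using pep1 by (simp add: Int_commute)
  have pep2': "\<And>e. e \<in> Ed - {e1,e2,e3} \<Longrightarrow> {Orig y, Sub e3 y} \<inter> pe ends e = {}"
    using pep2 by (simp add: Int_commute)
  have Mcases: "\<And>m. m \<in> M \<Longrightarrow> (\<exists>e\<in>Ed - {e1,e2,e3}. m = pe ends e) \<or> m = {Sub e1 x, Orig x} \<or> m = {Orig y, Sub e3 y}"
    unfolding M_def by blast
  have match: "induced_perfect_matching E' P"
    unfolding induced_perfect_matching_def
  proof (intro exI[of _ M] conjI)
    show "M \<subseteq> E'"
    proof
      fix m assume "m \<in> M"
      then have "(\<exists>e\<in>Ed - {e1,e2,e3}. m = pe ends e) \<or> m = {Sub e1 x, Orig x} \<or> m = {Orig y, Sub e3 y}"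
        by (rule Mcases)
      then show "m \<in> E'"
      proof (elim disjE bexE)
        fix e assume e: "e \<in> Ed - {e1,e2,e3}" and me: "m = pe ends e"
        have "pe ends e \<in> ES" unfolding ES_def using pe_in_edges[OF H] e by blast
        moreover have "Sub e2 x \<notin> pe ends e" using e pe_tag_sub[of e2 x ends e] by blast
        then have "pe ends e \<noteq> {Sub e2 x, Sub e2 y}" by auto
        ultimately show ?thesis unfolding me by (rule inE')
      next
        assume "m = {Sub e1 x, Orig x}"
        then show ?thesis using eo[OF e1(1) _ c1 xNL] e1 by (simp add: insert_commute)
      next
        assume "m = {Orig y, Sub e3 y}"
        then show ?thesis using eo[OF e3(1) _ c3 yNL] e3 by simp
      qed
    qed
    show "\<forall>m\<in>M. m \<subseteq> P"
    proof
      fix m assume "m \<in> M"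
      then have "(\<exists>e\<in>Ed - {e1,e2,e3}. m = pe ends e) \<or> m = {Sub e1 x, Orig x} \<or> m = {Orig y, Sub e3 y}"
        by (rule Mcases)
      then show "m \<subseteq> P" by (elim disjE bexE) (use peP Sx Sy Ox in auto)
    qed
    show "\<forall>m\<in>M. \<forall>m'\<in>M. m \<noteq> m' \<longrightarrow> m \<inter> m' = {}"
    proof (intro ballI impI)
      fix m m' assume mm: "m \<in> M" "m' \<in> M" "m \<noteq> m'"
      have A: "(\<exists>e\<in>Ed - {e1,e2,e3}. m = pe ends e) \<or> m = {Sub e1 x, Orig x} \<or> m = {Orig y, Sub e3 y}"
        by (rule Mcases[OF mm(1)])
      have B: "(\<exists>e\<in>Ed - {e1,e2,e3}. m' = pe ends e) \<or> m' = {Sub e1 x, Orig x} \<or> m' = {Orig y, Sub e3 y}"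
        by (rule Mcases[OF mm(2)])
      show "m \<inter> m' = {}"
        using A
      proof (elim disjE bexE)
        fix e assume e: "e \<in> Ed - {e1,e2,e3}" and me: "m = pe ends e"
        show ?thesis using B
        proof (elim disjE bexE)
          fix e' assume e': "e' \<in> Ed - {e1,e2,e3}" and me': "m' = pe ends e'"
          have "e \<noteq> e'" using mm(3) me me' by blast
          then show ?thesis unfolding me me' by (rule pe_disj)
        next
          assume me': "m' = {Sub e1 x, Orig x}"
          show ?thesis unfolding me me' by (rule pep1[OF e])
        next
          assume me': "m' = {Orig y, Sub e3 y}"
          show ?thesis unfolding me me' by (rule pep2[OF e])
        qed
      next
        assume me: "m = {Sub e1 x, Orig x}"
        show ?thesis using B
        proof (elim disjE bexE)
          fix e' assume e': "e' \<in> Ed - {e1,e2,e3}" and me': "m' = pe ends e'"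
          show ?thesis unfolding me me' by (rule pep1'[OF e'])
        next
          assume me': "m' = {Sub e1 x, Orig x}"
          then show ?thesis using mm(3) me by blast
        next
          assume me': "m' = {Orig y, Sub e3 y}"
          show ?thesis unfolding me me' by (rule p12)
        qed
      next
        assume me: "m = {Orig y, Sub e3 y}"
        show ?thesis using B
        proof (elim disjE bexE)
          fix e' assume e': "e' \<in> Ed - {e1,e2,e3}" and me': "m' = pe ends e'"
          show ?thesis unfolding me me' by (rule pep2'[OF e'])
        next
          assume me': "m' = {Sub e1 x, Orig x}"
          show ?thesis unfolding me me' by (rule p12')
        next
          assume me': "m' = {Orig y, Sub e3 y}"
          then show ?thesis using mm(3) me by blast
        qed
      qed
    qed
    show "\<Union>M = P"
    proof
      show "\<Union>M \<subseteq> P"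
      proof
        fix z assume "z \<in> \<Union>M"
        then obtain m where mM: "m \<in> M" and "z \<in> m" by blast
        from mM have "(\<exists>e\<in>Ed - {e1,e2,e3}. m = pe ends e) \<or> m = {Sub e1 x, Orig x} \<or> m = {Orig y, Sub e3 y}"
          by (rule Mcases)
        then show "z \<in> P" by (elim disjE bexE) (use peP Sx Sy Ox \<open>z \<in> m\<close> in auto)
      qed
      show "P \<subseteq> \<Union>M"
      proof
        fix z assume zP: "z \<in> P"
        have p1: "{Sub e1 x, Orig x} \<in> M" "{Orig y, Sub e3 y} \<in> M" unfolding M_def by blast+
        have q1: "Sub e1 x \<in> \<Union>M" "Orig x \<in> \<Union>M" "Orig y \<in> \<Union>M" "Sub e3 y \<in> \<Union>M"
          using p1 by blast+
        show "z \<in> \<Union>M"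
        proof (cases "z = Orig x \<or> z = Orig y")
          case True then show ?thesis using q1 by blast
        next
          case False
          then have zS: "z \<in> Sset" "z \<notin> X" using zP unfolding P_def by blast+
          then obtain e where e: "e \<in> Ed" "z \<in> pe ends e" unfolding Sset_def by blast
          show ?thesis
          proof (cases "e \<in> {e1,e2,e3}")
            case False
            then have "pe ends e \<in> M" unfolding M_def using e(1) by blast
            then show ?thesis using e(2) by blast
          next
            case True
            then have ee: "e = e1 \<or> e = e2 \<or> e = e3" by simp
            then have "card (ends e) = 2" using c1 c2 c3 by (elim disjE) simp_all
            then obtain v where v: "v \<in> ends e" "z = Sub e v" using pe_elim[OF e(2)] by blast
            from ee have "z = Sub e1 x \<or> z = Sub e3 y"
            proof (elim disjE)
              assume ee: "e = e1"
              have "v \<in> {x', x}" using v(1) e1(2) ee by metis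
              then have "v = x' \<or> v = x" by blast
              then show ?thesis
              proof (elim disjE)
                assume "v = x'"
                then have "z = Sub e1 x'" using v(2) ee by metis
                then have "z \<in> X" unfolding X_def by blast
                then show ?thesis using zS(2) by blast
              next
                assume "v = x"
                then have "z = Sub e1 x" using v(2) ee by metis
                then show ?thesis by (rule disjI1)
              qed
            next
              assume ee: "e = e2"
              have "v = y \<or> v = x" using v(1) e2(2) ee by simp
              then have "z \<in> X" using v(2) ee unfolding X_def by auto
              then show ?thesis using zS(2) by blast
            next
              assume ee: "e = e3"
              have "v = y' \<or> v = y" using v(1) e3(2) ee by simp
              then show ?thesis
              proof (elim disjE)
                assume "v = y'"
                then have "z \<in> X" using v(2) ee unfolding X_def by simp
                then show ?thesis using zS(2) by blast
              next
                assume "v = y"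
                then show ?thesis using v(2) ee by simp
              qed
            qed
            then show ?thesis using q1 by blast
          qed
        qed
      qed
    qed
  qed
  have dE': "dpdp VS E'"
    unfolding dpdp_def paired_dominating_def
    by (rule exI[of _ D], rule exI[of _ P]) (simp add: disj cover domD domP match)
  have E'sub: "E' \<subset> ES" unfolding E'_def using bb by blast
  have dES: "dpdp VS ES" using dpdp_mono[of E' ES VS] E'sub dE' by blast
  have "dpdp VS ES \<and> \<not> minimal_dpdp VS ES"
    unfolding minimal_dpdp_def using dES E'sub dE' by blast
  then show ?thesis using VS_def ES_def by simp
qed

end
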